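(* Let $(\mathbf S,+,0,\mathscr F)$ be a semilattice with operators. (1) An ideal $I$ of $\mathbf S$ is the $0$-class of some congruence relation if and only if $f(I)\subseteq I$ for every $f\in\mathscr F$. (2) If the ideal $I$ is $\mathscr F$-closed, then the least congruence with $0$-class $I$ is $\eta(I)$, the semilattice congruence generated by $I$ (i.e., by collapsing $I$ to $0$), and it is characterized by: $x\,\eta(I)\,y$ iff $x+i=y+i$ for some $i\in I$. (3) If the ideal $I$ is $\mathscr F$-closed, there is also a greatest congruence $\tau(I)$ with $0$-class $I$, given by: $x\,\tau(I)\,y$ iff for every $h\in\mathscr F^\dagger$, $h(x)\in I\Leftrightarrow h(y)\in I$, where $\mathscr F^\dagger$ is the monoid of maps generated by $\mathscr F$ (including the identity).
   Context: A semilattice with operators $(\mathbf S,+,0,\mathscr F)$ is a join semilattice $(S,+)$ with least element $0$ together with a set $\mathscr F$ of unary maps $S\to S$ each preserving $+$ and $0$. Congruences are equivalence relations compatible with $+$ and every $f\in\mathscr F$. An ideal is a nonempty down-set closed under $+$. *)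

theory Defs
  imports Main
begin

definition join_semilattice :: "'a set \<Rightarrow> ('a \<Rightarrow> 'a \<Rightarrow> 'a) \<Rightarrow> 'a \<Rightarrow> bool" where
  "join_semilattice S p z \<longleftrightarrow>
     z \<in> S \<and>
     (\<forall>x\<in>S. \<forall>y\<in>S. p x y \<in> S) \<and>
     (\<forall>x\<in>S. \<forall>y\<in>S. \<forall>w\<in>S. p (p x y) w = p x (p y w)) \<and>
     (\<forall>x\<in>S. \<forall>y\<in>S. p x y = p y x) \<and>
     (\<forall>x\<in>S. p x x = x) \<and>
     (\<forall>x\<in>S. p z x = x)"

definition semilattice_with_operators ::
  "'a set \<Rightarrow> ('a \<Rightarrow> 'a \<Rightarrow> 'a) \<Rightarrow> 'a \<Rightarrow> ('a \<Rightarrow> 'a) set \<Rightarrow> bool" where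
  "semilattice_with_operators S p z F \<longleftrightarrow>
     join_semilattice S p z \<and>
     (\<forall>f\<in>F. (\<forall>x\<in>S. f x \<in> S) \<and> (\<forall>x\<in>S. \<forall>y\<in>S. f (p x y) = p (f x) (f y)) \<and> f z = z)"

definition sl_le :: "('a \<Rightarrow> 'a \<Rightarrow> 'a) \<Rightarrow> 'a \<Rightarrow> 'a \<Rightarrow> bool" where
  "sl_le p x y \<longleftrightarrow> p x y = y"

definition sl_ideal :: "'a set \<Rightarrow> ('a \<Rightarrow> 'a \<Rightarrow> 'a) \<Rightarrow> 'a set \<Rightarrow> bool" where
  "sl_ideal S p I \<longleftrightarrow>
     I \<subseteq> S \<and> I \<noteq> {} \<and>
     (\<forall>x\<in>S. \<forall>y\<in>I. sl_le p x y \<longrightarrow> x \<in> I) \<and>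
     (\<forall>x\<in>I. \<forall>y\<in>I. p x y \<in> I)"

definition sl_congruence :: "'a set \<Rightarrow> ('a \<Rightarrow> 'a \<Rightarrow> 'a) \<Rightarrow> ('a \<times> 'a) set \<Rightarrow> bool" where
  "sl_congruence S p \<theta> \<longleftrightarrow>
     equiv S \<theta> \<and>
     (\<forall>x y u v. (x, y) \<in> \<theta> \<longrightarrow> (u, v) \<in> \<theta> \<longrightarrow> (p x u, p y v) \<in> \<theta>)"

definition slo_congruence ::
  "'a set \<Rightarrow> ('a \<Rightarrow> 'a \<Rightarrow> 'a) \<Rightarrow> ('a \<Rightarrow> 'a) set \<Rightarrow> ('a \<times> 'a) set \<Rightarrow> bool" where
  "slo_congruence S p F \<theta> \<longleftrightarrow>
     sl_congruence S p \<theta> \<and>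
     (\<forall>f\<in>F. \<forall>x y. (x, y) \<in> \<theta> \<longrightarrow> (f x, f y) \<in> \<theta>)"

definition zero_class :: "'a set \<Rightarrow> 'a \<Rightarrow> ('a \<times> 'a) set \<Rightarrow> 'a set" where
  "zero_class S z \<theta> = {x \<in> S. (x, z) \<in> \<theta>}"

definition eta :: "'a set \<Rightarrow> ('a \<Rightarrow> 'a \<Rightarrow> 'a) \<Rightarrow> 'a set \<Rightarrow> ('a \<times> 'a) set" where
  "eta S p I = \<Inter>{\<theta>. sl_congruence S p \<theta> \<and> I \<times> I \<subseteq> \<theta>}"

inductive_set Fdag :: "('a \<Rightarrow> 'a) set \<Rightarrow> ('a \<Rightarrow> 'a) set" for F where
  Fdag_id: "id \<in> Fdag F"
| Fdag_comp: "f \<in> F \<Longrightarrow> h \<in> Fdag F \<Longrightarrow> f \<circ> h \<in> Fdag F"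

definition tau :: "'a set \<Rightarrow> ('a \<Rightarrow> 'a) set \<Rightarrow> 'a set \<Rightarrow> ('a \<times> 'a) set" where
  "tau S F I = {(x, y). x \<in> S \<and> y \<in> S \<and> (\<forall>h\<in>Fdag F. h x \<in> I \<longleftrightarrow> h y \<in> I)}"

end

theory Submission
  imports Defs
begin

locale slo_ctx =
  fixes S :: "'a set" and p :: "'a \<Rightarrow> 'a \<Rightarrow> 'a" and z :: 'a and F :: "('a \<Rightarrow> 'a) set"
  assumes slo: "semilattice_with_operators S p z F"
begin

lemma zS: "z \<in> S" and pS: "x \<in> S \<Longrightarrow> y \<in> S \<Longrightarrow> p x y \<in> S"
  and assoc: "x \<in> S \<Longrightarrow> y \<in> S \<Longrightarrow> w \<in> S \<Longrightarrow> p (p x y) w = p x (p y w)"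
  and comm: "x \<in> S \<Longrightarrow> y \<in> S \<Longrightarrow> p x y = p y x"
  and idem: "x \<in> S \<Longrightarrow> p x x = x"
  and zl: "x \<in> S \<Longrightarrow> p z x = x"
  using slo unfolding semilattice_with_operators_def join_semilattice_def by blast+

lemma fS: "f \<in> F \<Longrightarrow> x \<in> S \<Longrightarrow> f x \<in> S"
  and fp: "f \<in> F \<Longrightarrow> x \<in> S \<Longrightarrow> y \<in> S \<Longrightarrow> f (p x y) = p (f x) (f y)"
  and fz: "f \<in> F \<Longrightarrow> f z = z"
  using slo unfolding semilattice_with_operators_def by blast+

lemma zr: "x \<in> S \<Longrightarrow> p x z = x" using comm zl zS by metis

lemma Fdag_props: "h \<in> Fdag F \<Longrightarrow> (\<forall>x\<in>S. h x \<in> S) \<and> (\<forall>x\<in>S. \<forall>y\<in>S. h (p x y) = p (h x) (h y)) \<and> h z = z"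
  by (induction h rule: Fdag.induct) (auto simp: fS fp fz)

lemma Fdag_compr: "h \<in> Fdag F \<Longrightarrow> f \<in> F \<Longrightarrow> h \<circ> f \<in> Fdag F"
proof (induction h rule: Fdag.induct)
  case Fdag_id
  then show ?case using Fdag.Fdag_comp[OF Fdag_id Fdag.Fdag_id] by simp
next
  case (Fdag_comp g h)
  then show ?case using Fdag.Fdag_comp[of g F "h \<circ> f"] by (simp add: comp_assoc comp_def)
qed

context
  fixes I assumes id: "sl_ideal S p I"
begin

lemma IS: "I \<subseteq> S" using id unfolding sl_ideal_def by blast
lemma Ip: "x \<in> I \<Longrightarrow> y \<in> I \<Longrightarrow> p x y \<in> I" using id unfolding sl_ideal_def by blast
lemma Idown: "x \<in> S \<Longrightarrow> y \<in> I \<Longrightarrow> p x y = y \<Longrightarrow> x \<in> I"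
  using id unfolding sl_ideal_def sl_le_def by blast
lemma zI: "z \<in> I"
proof -
  obtain y where "y \<in> I" using id unfolding sl_ideal_def by blast
  then show ?thesis using Idown[of z y] zS zl IS by blast
qed

lemma join_in: "x \<in> S \<Longrightarrow> y \<in> S \<Longrightarrow> p x y \<in> I \<longleftrightarrow> x \<in> I \<and> y \<in> I"
proof
  assume xy: "x \<in> S" "y \<in> S" "p x y \<in> I"
  have "p x (p x y) = p x y" using assoc[of x x y] idem xy by simp
  moreover have "p y (p x y) = p x y" using assoc[of y x y] comm[of x y] assoc[of x y y] idem xy by metis
  ultimately show "x \<in> I \<and> y \<in> I" using Idown xy by blast
qed (use Ip in blast)

definition R where "R = {(x,y). x \<in> S \<and> y \<in> S \<and> (\<exists>i\<in>I. p x i = p y i)}"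

lemma R_cong: "sl_congruence S p R"
  unfolding sl_congruence_def
proof (intro conjI allI impI)
  show "equiv S R"
  proof (rule equivI)
    show "R \<subseteq> S \<times> S" unfolding R_def by auto
    show "refl_on S R" unfolding refl_on_def R_def using zI by blast
    show "sym R" unfolding sym_def R_def by (auto intro: sym)
    show "trans R" unfolding trans_def R_def
    proof (clarsimp)
      fix x y w i j assume h: "x \<in> S" "y \<in> S" "w \<in> S" "i \<in> I" "p x i = p y i" "j \<in> I" "p y j = p w j"
      have iS: "i \<in> S" "j \<in> S" using h IS by auto
      have "p x (p i j) = p (p y i) j" using assoc h iS by metis
      also have "\<dots> = p (p y j) i" using assoc comm h iS by metis
      also have "\<dots> = p w (p i j)" using assoc comm h iS by metis
      finally show "\<exists>k\<in>I. p x k = p w k" using Ip h by blast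
    qed
  qed
next
  fix x y u v assume a: "(x, y) \<in> R" "(u, v) \<in> R"
  then obtain i j where h: "x \<in> S" "y \<in> S" "u \<in> S" "v \<in> S" "i \<in> I" "j \<in> I"
    "p x i = p y i" "p u j = p v j" unfolding R_def by auto
  have iS: "i \<in> S" "j \<in> S" using h IS by auto
  have "p (p x u) (p i j) = p (p x i) (p u j)" using assoc comm h iS pS by metis
  also have "\<dots> = p (p y i) (p v j)" using h by simp
  also have "\<dots> = p (p y v) (p i j)" using assoc comm h iS pS by metis
  finally show "(p x u, p y v) \<in> R" unfolding R_def using h pS Ip by blast
qed

lemma R_II: "I \<times> I \<subseteq> R"
proof clarify
  fix i j assume h: "i \<in> I" "j \<in> I"
  have iS: "i \<in> S" "j \<in> S" using h IS by auto
  have "p i (p i j) = p j (p i j)" using assoc comm idem iS by metis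
  then show "(i, j) \<in> R" unfolding R_def using iS h Ip by blast
qed

lemma R_sub: "sl_congruence S p \<theta> \<Longrightarrow> I \<times> I \<subseteq> \<theta> \<Longrightarrow> R \<subseteq> \<theta>"
proof clarify
  fix x y assume c: "sl_congruence S p \<theta>" "I \<times> I \<subseteq> \<theta>" "(x, y) \<in> R"
  then obtain i where h: "x \<in> S" "y \<in> S" "i \<in> I" "p x i = p y i" unfolding R_def by auto
  have eq: "equiv S \<theta>" and cp: "\<And>a b c d. (a,b) \<in> \<theta> \<Longrightarrow> (c,d) \<in> \<theta> \<Longrightarrow> (p a c, p b d) \<in> \<theta>"
    using c unfolding sl_congruence_def by blast+
  have zi: "(z, i) \<in> \<theta>" "(i, z) \<in> \<theta>" using c(2) zI h by auto
  have "(x, x) \<in> \<theta>" "(y, y) \<in> \<theta>" using eq h unfolding equiv_def refl_on_def by auto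
  then have "(p x z, p x i) \<in> \<theta>" "(p y i, p y z) \<in> \<theta>" using cp zi by auto
  then have "(x, p y i) \<in> \<theta>" "(p y i, y) \<in> \<theta>" using zr h by auto
  then show "(x, y) \<in> \<theta>" using eq unfolding equiv_def trans_def by blast
qed

lemma eta_eq: "eta S p I = R"
  unfolding eta_def using R_cong R_II R_sub by blast

lemma zero_R: "zero_class S z R = I"
proof -
  have "x \<in> I" if "x \<in> S" "i \<in> I" "p x i = p z i" for x i
  proof -
    have "p z i = i" using zl IS that by auto
    then show ?thesis using Idown that by auto
  qed
  moreover have "(x, z) \<in> R" if "x \<in> I" for x
  proof -
    have "x \<in> S" using that IS by auto
    then have "p x x = p z x" using idem zl by auto
    then show ?thesis unfolding R_def using that zS \<open>x \<in> S\<close> by blast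
  qed
  ultimately show ?thesis unfolding zero_class_def R_def using IS by blast
qed

context assumes cl: "\<forall>f\<in>F. f ` I \<subseteq> I"
begin

lemma R_slo: "slo_congruence S p F R"
  unfolding slo_congruence_def
proof (intro conjI R_cong ballI allI impI)
  fix f x y assume f: "f \<in> F" and "(x, y) \<in> R"
  then obtain i where h: "x \<in> S" "y \<in> S" "i \<in> I" "p x i = p y i" unfolding R_def by auto
  have "i \<in> S" using h IS by auto
  then have "p (f x) (f i) = p (f y) (f i)" using fp f h by metis
  moreover have "f i \<in> I" using cl f h by auto
  ultimately show "(f x, f y) \<in> R" unfolding R_def using fS f h by blast
qed

lemma R_least: "slo_congruence S p F \<theta> \<Longrightarrow> zero_class S z \<theta> = I \<Longrightarrow> R \<subseteq> \<theta>"
proof -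
  assume a: "slo_congruence S p F \<theta>" "zero_class S z \<theta> = I"
  have c: "sl_congruence S p \<theta>" using a unfolding slo_congruence_def by blast
  then have eq: "equiv S \<theta>" unfolding sl_congruence_def by blast
  have "I \<times> I \<subseteq> \<theta>"
  proof clarify
    fix i j assume "i \<in> I" "j \<in> I"
    then have "(i, z) \<in> \<theta>" "(j, z) \<in> \<theta>" using a(2) unfolding zero_class_def by auto
    then show "(i, j) \<in> \<theta>" using eq unfolding equiv_def sym_def trans_def by blast
  qed
  then show ?thesis using R_sub c by blast
qed

lemma tau_slo: "slo_congruence S p F (tau S F I)"
  unfolding slo_congruence_def sl_congruence_def
proof (intro conjI ballI allI impI)
  show "equiv S (tau S F I)"
    by (rule equivI) (auto simp: tau_def refl_on_def sym_def trans_def)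
next
  fix x y u v assume a: "(x, y) \<in> tau S F I" "(u, v) \<in> tau S F I"
  then have h: "x \<in> S" "y \<in> S" "u \<in> S" "v \<in> S" unfolding tau_def by auto
  have "h (p x u) \<in> I \<longleftrightarrow> h (p y v) \<in> I" if hF: "h \<in> Fdag F" for h
  proof -
    have hp: "\<forall>x\<in>S. h x \<in> S" "\<forall>x\<in>S. \<forall>y\<in>S. h (p x y) = p (h x) (h y)"
      using Fdag_props[OF hF] by auto
    have "h (p x u) \<in> I \<longleftrightarrow> h x \<in> I \<and> h u \<in> I" using hp h join_in by auto
    also have "\<dots> \<longleftrightarrow> h y \<in> I \<and> h v \<in> I" using a hF unfolding tau_def by auto
    also have "\<dots> \<longleftrightarrow> h (p y v) \<in> I" using hp h join_in by auto
    finally show ?thesis .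
  qed
  then show "(p x u, p y v) \<in> tau S F I" unfolding tau_def using h pS by auto
next
  fix f x y assume f: "f \<in> F" and a: "(x, y) \<in> tau S F I"
  then have h: "x \<in> S" "y \<in> S" unfolding tau_def by auto
  have "h (f x) \<in> I \<longleftrightarrow> h (f y) \<in> I" if "h \<in> Fdag F" for h
    using a Fdag_compr[OF that f] unfolding tau_def by auto
  then show "(f x, f y) \<in> tau S F I" unfolding tau_def using h fS f by auto
qed

lemma Fdag_I: "h \<in> Fdag F \<Longrightarrow> x \<in> I \<Longrightarrow> h x \<in> I"
  by (induction h rule: Fdag.induct) (use cl in auto)

lemma tau_zero: "zero_class S z (tau S F I) = I"
proof -
  have "h z = z" if "h \<in> Fdag F" for h using Fdag_props[OF that] by auto
  then have "x \<in> S \<and> (x, z) \<in> tau S F I \<longleftrightarrow> x \<in> I" for x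
    using Fdag_I zI IS zS Fdag.Fdag_id[of F] unfolding tau_def by auto
  then show ?thesis unfolding zero_class_def by auto
qed

lemma tau_great: assumes a1: "slo_congruence S p F \<theta>" and a2: "zero_class S z \<theta> = I" shows "\<theta> \<subseteq> tau S F I"
proof (rule subrelI)
  fix x y assume a3: "(x, y) \<in> \<theta>"
  note a = a1 a2 a3
  have eq: "equiv S \<theta>" using a unfolding slo_congruence_def sl_congruence_def by blast
  have fc: "\<And>f a b. f \<in> F \<Longrightarrow> (a, b) \<in> \<theta> \<Longrightarrow> (f a, f b) \<in> \<theta>"
    using a unfolding slo_congruence_def by blast
  have hc: "(h x, h y) \<in> \<theta>" if "h \<in> Fdag F" for h
    using that by (induction h rule: Fdag.induct) (auto intro: fc a(3))
  have xy: "x \<in> S" "y \<in> S" using eq a(3) unfolding equiv_def refl_on_def by auto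
  have "h x \<in> I \<longleftrightarrow> h y \<in> I" if "h \<in> Fdag F" for h
  proof -
    have "(h x, h y) \<in> \<theta>" using hc that .
    then have "(h x, z) \<in> \<theta> \<longleftrightarrow> (h y, z) \<in> \<theta>" using eq unfolding equiv_def sym_def trans_def by blast
    moreover have "h x \<in> S" "h y \<in> S" using Fdag_props[OF that] xy by auto
    ultimately show ?thesis using a(2) unfolding zero_class_def by auto
  qed
  then show "(x, y) \<in> tau S F I" unfolding tau_def using xy by blast
qed

end

lemma part1: "(\<exists>\<theta>. slo_congruence S p F \<theta> \<and> zero_class S z \<theta> = I) \<longleftrightarrow> (\<forall>f\<in>F. f ` I \<subseteq> I)"
proof
  assume "\<exists>\<theta>. slo_congruence S p F \<theta> \<and> zero_class S z \<theta> = I"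
  then obtain \<theta> where a: "slo_congruence S p F \<theta>" "zero_class S z \<theta> = I" by blast
  show "\<forall>f\<in>F. f ` I \<subseteq> I"
  proof (intro ballI subsetI)
    fix f w assume f: "f \<in> F" and "w \<in> f ` I"
    then obtain i where i: "i \<in> I" "w = f i" by auto
    then have "(i, z) \<in> \<theta>" using a(2) unfolding zero_class_def by auto
    then have "(f i, f z) \<in> \<theta>" using a(1) f unfolding slo_congruence_def by blast
    moreover have "f i \<in> S" using fS f i IS by auto
    moreover have "f z = z" using fz f by blast
    ultimately show "w \<in> I" using a(2) i unfolding zero_class_def by auto
  qed
next
  assume "\<forall>f\<in>F. f ` I \<subseteq> I"
  then show "\<exists>\<theta>. slo_congruence S p F \<theta> \<and> zero_class S z \<theta> = I" using R_slo zero_R by blast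
qed

end
end

theorem theorem5p1:
  fixes S :: "'a set" and p :: "'a \<Rightarrow> 'a \<Rightarrow> 'a" and z :: 'a and F :: "('a \<Rightarrow> 'a) set"
  assumes slo: "semilattice_with_operators S p z F"
  shows
    "(\<forall>I. sl_ideal S p I \<longrightarrow>
        ((\<exists>\<theta>. slo_congruence S p F \<theta> \<and> zero_class S z \<theta> = I) \<longleftrightarrow> (\<forall>f\<in>F. f ` I \<subseteq> I)))
     \<and> (\<forall>I. sl_ideal S p I \<longrightarrow> (\<forall>f\<in>F. f ` I \<subseteq> I) \<longrightarrow>
          slo_congruence S p F (eta S p I) \<and> zero_class S z (eta S p I) = I \<and>
          (\<forall>\<theta>. slo_congruence S p F \<theta> \<and> zero_class S z \<theta> = I \<longrightarrow> eta S p I \<subseteq> \<theta>) \<and>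
          (\<forall>x y. (x, y) \<in> eta S p I \<longleftrightarrow> x \<in> S \<and> y \<in> S \<and> (\<exists>i\<in>I. p x i = p y i)))
     \<and> (\<forall>I. sl_ideal S p I \<longrightarrow> (\<forall>f\<in>F. f ` I \<subseteq> I) \<longrightarrow>
          slo_congruence S p F (tau S F I) \<and> zero_class S z (tau S F I) = I \<and>
          (\<forall>\<theta>. slo_congruence S p F \<theta> \<and> zero_class S z \<theta> = I \<longrightarrow> \<theta> \<subseteq> tau S F I))"
proof -
  interpret slo_ctx S p z F using slo by unfold_locales
  show ?thesis
    using part1 R_slo zero_R R_least eta_eq tau_slo tau_zero tau_great
    by (simp add: R_def)
qed

end
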